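(* Let $M=(Q,\mathcal{A},\Delta,I,F)$ be a globally mintermised symbolic finite automaton and let $N=(Q,\mathbb{P}_\Delta,\Delta,I,F)$ be its syntactic NFA. Then $\preceq_M = \preceq_N$.
   Context: An effective Boolean algebra is $\mathcal{A}=(\mathfrak{D},\mathbb{P},[\![\cdot]\!],\vee,\wedge,\neg)$ where $\mathbb{P}$ is a set of predicates closed under $\vee,\wedge,\neg$, and $[\![\cdot]\!]:\mathbb{P}\to 2^{\mathfrak{D}}$ satisfies $[\![\varphi\vee\psi]\!]=[\![\varphi]\!]\cup[\![\psi]\!]$, $[\![\varphi\wedge\psi]\!]=[\![\varphi]\!]\cap[\![\psi]\!]$, $[\![\neg\varphi]\!]=\mathfrak{D}\setminus[\![\varphi]\!]$; $\mathit{IsSat}(\varphi)$ means $[\![\varphi]\!]\neq\emptyset$, and all operations and $\mathit{IsSat}$ are computable. A symbolic finite automaton (SFA) is $M=(Q,\mathcal{A},\Delta,I,F)$ with finite state set $Q$, a finite transition relation $\Delta\subseteq Q\times\mathbb{P}\times Q$ whose predicates are all satisfiable, initial states $I$ and final states $F$. Its concrete transitions are $[\![\Delta]\!]=\{(q,a,p)\mid (q,\psi,p)\in\Delta,\ a\in[\![\psi]\!]\}$. Let $\mathbb{P}_\Delta=\{\varphi\mid \exists p,q:(p,\varphi,q)\in\Delta\}$. A set of predicates is a partition if the denotations of any two distinct members are disjoint. $M$ is globally mintermised if $\mathbb{P}_\Delta$ is a partition. The syntactic NFA of $M$ is $(Q,\mathbb{P}_\Delta,\Delta,I,F)$, i.e.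 the NFA over the finite alphabet $\mathbb{P}_\Delta$ whose transitions are those of $\Delta$ with predicates treated as plain (syntactic) letters. A relation $S\subseteq Q\times Q$ is a simulation on the SFA $M$ if whenever $(p,r)\in S$: (C1) $p\in F$ implies $r\in F$; (C2) for all $a\in\mathfrak{D}$ and $p'$ with $(p,a,p')\in[\![\Delta]\!]$ there is $r'$ with $(r,a,r')\in[\![\Delta]\!]$ and $(p',r')\in S$. For an NFA (finite alphabet $\Sigma$, transitions $\Delta\subseteq Q\times\Sigma\times Q$), simulation is defined the same way with $a$ ranging over $\Sigma$ and the transitions of $\Delta$. $\preceq_M$ (resp. $\preceq_N$) denotes the unique maximal simulation on $M$ (resp. $N$). *)

theory Defs
  imports Main
begin

(* Computability of the operations / IsSat is not expressible in HOL. *)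
definition eff_bool_alg ::
  "'d set \<Rightarrow> 'p set \<Rightarrow> ('p \<Rightarrow> 'd set) \<Rightarrow> ('p \<Rightarrow> 'p \<Rightarrow> 'p) \<Rightarrow> ('p \<Rightarrow> 'p \<Rightarrow> 'p) \<Rightarrow> ('p \<Rightarrow> 'p) \<Rightarrow> bool"
where
  "eff_bool_alg D P den dis con neg \<longleftrightarrow>
     (\<forall>\<phi>\<in>P. den \<phi> \<subseteq> D) \<and>
     (\<forall>\<phi>\<in>P. \<forall>\<psi>\<in>P. dis \<phi> \<psi> \<in> P \<and> con \<phi> \<psi> \<in> P) \<and> (\<forall>\<phi>\<in>P. neg \<phi> \<in> P) \<and>
     (\<forall>\<phi>\<in>P. \<forall>\<psi>\<in>P. den (dis \<phi> \<psi>) = den \<phi> \<union> den \<psi>) \<and>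
     (\<forall>\<phi>\<in>P. \<forall>\<psi>\<in>P. den (con \<phi> \<psi>) = den \<phi> \<inter> den \<psi>) \<and>
     (\<forall>\<phi>\<in>P. den (neg \<phi>) = D - den \<phi>)"

definition IsSat :: "('p \<Rightarrow> 'd set) \<Rightarrow> 'p \<Rightarrow> bool" where
  "IsSat den \<phi> \<longleftrightarrow> den \<phi> \<noteq> {}"

definition is_SFA ::
  "'q set \<Rightarrow> 'd set \<Rightarrow> 'p set \<Rightarrow> ('p \<Rightarrow> 'd set) \<Rightarrow> ('p \<Rightarrow> 'p \<Rightarrow> 'p) \<Rightarrow> ('p \<Rightarrow> 'p \<Rightarrow> 'p) \<Rightarrow> ('p \<Rightarrow> 'p)
   \<Rightarrow> ('q \<times> 'p \<times> 'q) set \<Rightarrow> 'q set \<Rightarrow> 'q set \<Rightarrow> bool"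
where
  "is_SFA Q D P den dis con neg Delta I F \<longleftrightarrow>
     eff_bool_alg D P den dis con neg \<and> finite Q \<and> finite Delta \<and>
     Delta \<subseteq> Q \<times> P \<times> Q \<and> (\<forall>(q,\<psi>,p)\<in>Delta. IsSat den \<psi>) \<and> I \<subseteq> Q \<and> F \<subseteq> Q"

definition conc_trans :: "('p \<Rightarrow> 'd set) \<Rightarrow> ('q \<times> 'p \<times> 'q) set \<Rightarrow> ('q \<times> 'd \<times> 'q) set" where
  "conc_trans den Delta = {(q,a,p). \<exists>\<psi>. (q,\<psi>,p) \<in> Delta \<and> a \<in> den \<psi>}"

definition preds_of :: "('q \<times> 'p \<times> 'q) set \<Rightarrow> 'p set" where
  "preds_of Delta = {\<phi>. \<exists>p q. (p,\<phi>,q) \<in> Delta}"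

definition is_partition :: "('p \<Rightarrow> 'd set) \<Rightarrow> 'p set \<Rightarrow> bool" where
  "is_partition den Ps \<longleftrightarrow> (\<forall>\<phi>\<in>Ps. \<forall>\<psi>\<in>Ps. \<phi> \<noteq> \<psi> \<longrightarrow> den \<phi> \<inter> den \<psi> = {})"

definition globally_mintermised :: "('p \<Rightarrow> 'd set) \<Rightarrow> ('q \<times> 'p \<times> 'q) set \<Rightarrow> bool" where
  "globally_mintermised den Delta \<longleftrightarrow> is_partition den (preds_of Delta)"

definition is_simulation ::
  "'q set \<Rightarrow> 'a set \<Rightarrow> ('q \<times> 'a \<times> 'q) set \<Rightarrow> 'q set \<Rightarrow> ('q \<times> 'q) set \<Rightarrow> bool"
where
  "is_simulation Q Alph T F S \<longleftrightarrow> S \<subseteq> Q \<times> Q \<and>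
     (\<forall>(p,r)\<in>S. (p \<in> F \<longrightarrow> r \<in> F) \<and>
        (\<forall>a\<in>Alph. \<forall>p'. (p,a,p') \<in> T \<longrightarrow> (\<exists>r'. (r,a,r') \<in> T \<and> (p',r') \<in> S)))"

definition max_simulation ::
  "'q set \<Rightarrow> 'a set \<Rightarrow> ('q \<times> 'a \<times> 'q) set \<Rightarrow> 'q set \<Rightarrow> ('q \<times> 'q) set"
where
  "max_simulation Q Alph T F = \<Union>{S. is_simulation Q Alph T F S}"

definition sfa_max_sim ::
  "'q set \<Rightarrow> 'd set \<Rightarrow> ('p \<Rightarrow> 'd set) \<Rightarrow> ('q \<times> 'p \<times> 'q) set \<Rightarrow> 'q set \<Rightarrow> ('q \<times> 'q) set"
where
  "sfa_max_sim Q D den Delta F = max_simulation Q D (conc_trans den Delta) F"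

definition syn_nfa_max_sim ::
  "'q set \<Rightarrow> ('q \<times> 'p \<times> 'q) set \<Rightarrow> 'q set \<Rightarrow> ('q \<times> 'q) set"
where
  "syn_nfa_max_sim Q Delta F = max_simulation Q (preds_of Delta) Delta F"

end

theory Submission
  imports Defs
begin

theorem lemma2:
  fixes Q :: "'q set" and D :: "'d set" and P :: "'p set"
    and den :: "'p \<Rightarrow> 'd set" and dis con :: "'p \<Rightarrow> 'p \<Rightarrow> 'p" and neg :: "'p \<Rightarrow> 'p"
    and Delta :: "('q \<times> 'p \<times> 'q) set" and I F :: "'q set"
  assumes "is_SFA Q D P den dis con neg Delta I F"
    and "globally_mintermised den Delta"
  shows "sfa_max_sim Q D den Delta F = syn_nfa_max_sim Q Delta F"
proof -
  have sub: "\<And>p \<phi> q. (p,\<phi>,q) \<in> Delta \<Longrightarrow> den \<phi> \<subseteq> D \<and> den \<phi> \<noteq> {}"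
    using assms(1) unfolding is_SFA_def eff_bool_alg_def IsSat_def by fast
  have part: "\<And>\<phi> \<psi>. \<phi> \<in> preds_of Delta \<Longrightarrow> \<psi> \<in> preds_of Delta \<Longrightarrow> \<phi> \<noteq> \<psi> \<Longrightarrow> den \<phi> \<inter> den \<psi> = {}"
    using assms(2) unfolding globally_mintermised_def is_partition_def by blast
  have eq: "is_simulation Q D (conc_trans den Delta) F S = is_simulation Q (preds_of Delta) Delta F S" for S
  proof
    assume H: "is_simulation Q D (conc_trans den Delta) F S"
    show "is_simulation Q (preds_of Delta) Delta F S"
      unfolding is_simulation_def
    proof (intro conjI ballI)
      show "S \<subseteq> Q \<times> Q" using H unfolding is_simulation_def by blast
    next
      fix pr assume x: "pr \<in> S"
      obtain p r where pr: "pr = (p,r)" by fastforce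
      show "(case pr of (p, r) \<Rightarrow> (p \<in> F \<longrightarrow> r \<in> F) \<and>
        (\<forall>a\<in>preds_of Delta. \<forall>p'. (p, a, p') \<in> Delta \<longrightarrow> (\<exists>r'. (r, a, r') \<in> Delta \<and> (p', r') \<in> S)))"
        unfolding pr prod.case
      proof (intro conjI ballI allI impI)
        show "p \<in> F \<Longrightarrow> r \<in> F" using H x pr unfolding is_simulation_def by auto
      next
        fix \<phi> p' assume \<phi>: "\<phi> \<in> preds_of Delta" and t: "(p, \<phi>, p') \<in> Delta"
        obtain a where a: "a \<in> den \<phi>" "a \<in> D" using sub[OF t] by blast
        have "(p,a,p') \<in> conc_trans den Delta" using t a unfolding conc_trans_def by blast
        then obtain r' where "(r,a,r') \<in> conc_trans den Delta" "(p',r') \<in> S"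
          using H x pr a(2) unfolding is_simulation_def by fastforce
        then obtain \<psi> where \<psi>: "(r,\<psi>,r') \<in> Delta" "a \<in> den \<psi>" "(p',r') \<in> S"
          unfolding conc_trans_def by blast
        have "\<psi> \<in> preds_of Delta" using \<psi> unfolding preds_of_def by blast
        then have "\<psi> = \<phi>" using part[OF \<phi>] a \<psi> by blast
        then show "\<exists>r'. (r, \<phi>, r') \<in> Delta \<and> (p', r') \<in> S" using \<psi> by blast
      qed
    qed
  next
    assume H: "is_simulation Q (preds_of Delta) Delta F S"
    show "is_simulation Q D (conc_trans den Delta) F S"
      unfolding is_simulation_def
    proof (intro conjI ballI)
      show "S \<subseteq> Q \<times> Q" using H unfolding is_simulation_def by blast
    next
      fix pr assume x: "pr \<in> S"
      obtain p r where pr: "pr = (p,r)" by fastforce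
      show "(case pr of (p, r) \<Rightarrow> (p \<in> F \<longrightarrow> r \<in> F) \<and>
        (\<forall>a\<in>D. \<forall>p'. (p, a, p') \<in> conc_trans den Delta \<longrightarrow> (\<exists>r'. (r, a, r') \<in> conc_trans den Delta \<and> (p', r') \<in> S)))"
        unfolding pr prod.case
      proof (intro conjI ballI allI impI)
        show "p \<in> F \<Longrightarrow> r \<in> F" using H x pr unfolding is_simulation_def by auto
      next
        fix a p' assume "a \<in> D" "(p, a, p') \<in> conc_trans den Delta"
        then obtain \<phi> where t: "(p,\<phi>,p') \<in> Delta" "a \<in> den \<phi>" unfolding conc_trans_def by blast
        have "\<phi> \<in> preds_of Delta" using t unfolding preds_of_def by blast
        then obtain r' where "(r,\<phi>,r') \<in> Delta" "(p',r') \<in> S"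
          using H x pr t(1) unfolding is_simulation_def by fastforce
        then show "\<exists>r'. (r, a, r') \<in> conc_trans den Delta \<and> (p', r') \<in> S"
          using t(2) unfolding conc_trans_def by blast
      qed
    qed
  qed
  show ?thesis unfolding sfa_max_sim_def syn_nfa_max_sim_def max_simulation_def
    using eq by presburger
qed

end
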